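(* Let $\mathbf{A}\in\mathbb{R}^{M\times N}$, $\mathbf{Y}\in\mathbb{R}^{M\times L}$, and let $(\mathbf{g}(t),\mathbf{V}(t))$, $t\ge0$, evolve under the continuous gradient flow of $\mathcal{L}(\mathbf{g},\mathbf{V})=\Vert\mathbf{Y}-\mathbf{A}((\mathbf{g}^{\odot 2}\mathbf{1}_L)\odot\mathbf{V})\Vert_F^2$. Fix $i\in[N]$ and write $\mathbf{V}_{i:}(t)$ for the $i$-th row of $\mathbf{V}(t)$. Case I: if $\frac{1}{\sqrt2}|g_i(0)|=\Vert\mathbf{V}_{i:}(0)\Vert=0$, then $\frac{1}{\sqrt2}|g_i(t)|=\Vert\mathbf{V}_{i:}(t)\Vert=0$ for all $t>0$. Case II: if $\frac{1}{\sqrt2}|g_i(0)|=\Vert\mathbf{V}_{i:}(0)\Vert>0$, then $\frac{1}{\sqrt2}|g_i(t)|=\Vert\mathbf{V}_{i:}(t)\Vert>0$ for all $t>0$.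
   Context: $\odot$ is the entrywise product, $\mathbf{1}_L$ the $1\times L$ all-ones row vector, so the estimate has entries $g_i^2V_{ij}$; $\Vert\cdot\Vert$ on a row is the Euclidean norm. Gradient flow: $\frac{d}{dt}g_l=-\partial\mathcal{L}/\partial g_l$, $\frac{d}{dt}V_{lm}=-\partial\mathcal{L}/\partial V_{lm}$ along the curve. *)

theory Defs
  imports "HOL-Analysis.Analysis"
begin

definition lossGV ::
  "real^'n^'m \<Rightarrow> real^'l^'m \<Rightarrow> real^'n \<Rightarrow> real^'l^'n \<Rightarrow> real" where
  "lossGV A Y g V =
     (\<Sum>m\<in>UNIV. \<Sum>l\<in>UNIV. (Y$m$l - (\<Sum>n\<in>UNIV. A$m$n * ((g$n)^2 * V$n$l)))^2)"

definition dLdg ::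
  "real^'n^'m \<Rightarrow> real^'l^'m \<Rightarrow> real^'n \<Rightarrow> real^'l^'n \<Rightarrow> 'n \<Rightarrow> real" where
  "dLdg A Y g V k =
     deriv (\<lambda>s. lossGV A Y (\<chi> j. if j = k then s else g$j) V) (g$k)"

definition dLdV ::
  "real^'n^'m \<Rightarrow> real^'l^'m \<Rightarrow> real^'n \<Rightarrow> real^'l^'n \<Rightarrow> 'n \<Rightarrow> 'l \<Rightarrow> real" where
  "dLdV A Y g V k l =
     deriv (\<lambda>s. lossGV A Y g (\<chi> j. \<chi> j'. if j = k \<and> j' = l then s else V$j$j')) (V$k$l)"

end

theory Submission imports Defs begin

lemma if_deriv: "((\<lambda>s::real. if b then s else c) has_field_derivative (of_bool b)) F"
  by (cases b) (auto intro!: derivative_eq_intros)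

lemma ob_left: "(a::real) * (of_bool P * b) = of_bool P * (a * b)" by simp
lemma ob_if: "of_bool P * (x::real) = (if P then x else 0)" by simp
lemma ob_if2: "x * of_bool P = (if P then (x::real) else 0)" by simp
lemma sum_delta_conj: "(\<Sum>n\<in>(UNIV::'n::finite set). if n = k \<and> P then (f n::real) else 0) = (if P then f k else 0)"
  by (cases P) (simp_all add: sum.delta)
lemma mult_if0': "(if P then x else 0) * (a::real) = (if P then x * a else 0)" by simp
lemma neg_if0: "- (if P then x else 0) = (if P then - x else (0::real))" by simp
lemma mult_if0: "(a::real) * (if P then x else 0) = (if P then a * x else 0)" by simp
lemma if_same2: "(if n = k \<and> m = l then V$k$l else V$n$m) = V$n$m" by auto
lemma if_same: "(if n = k then g$k else g$n) = g$n" by auto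

lemma dLdg_eq:
  fixes A :: "real^'n^'m" and Y :: "real^'l^'m"
  shows "dLdg A Y g V k = - 4 * g$k * (\<Sum>l\<in>UNIV. (\<Sum>m\<in>UNIV. A$m$k *
     (Y$m$l - (\<Sum>n\<in>UNIV. A$m$n * ((g$n)^2 * V$n$l)))) * V$k$l)"
proof -
  have "((\<lambda>s. lossGV A Y (\<chi> j. if j = k then s else g$j) V) has_field_derivative
     - 4 * g$k * (\<Sum>l\<in>UNIV. (\<Sum>m\<in>UNIV. A$m$k *
     (Y$m$l - (\<Sum>n\<in>UNIV. A$m$n * ((g$n)^2 * V$n$l)))) * V$k$l)) (at (g$k))"
    unfolding lossGV_def vec_lambda_beta
    apply (rule derivative_eq_intros if_deriv refl | simp)+
    apply (simp add: if_same mult_ac)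
    apply (simp only: ob_left ob_if ob_if2)
    apply (simp only: mult_if0)
    apply (simp add: sum.delta)
    apply (simp add: sum_distrib_left sum_distrib_right algebra_simps)
    apply (subst sum.swap) 
    apply (simp add: sum_subtractf sum_negf)
    done
  then show ?thesis unfolding dLdg_def by (rule DERIV_imp_deriv)
qed

lemma dLdV_eq:
  fixes A :: "real^'n^'m" and Y :: "real^'l^'m"
  shows "dLdV A Y g V k l = - 2 * (g$k)^2 * (\<Sum>m\<in>UNIV. A$m$k *
     (Y$m$l - (\<Sum>n\<in>UNIV. A$m$n * ((g$n)^2 * V$n$l))))"
proof -
  have "((\<lambda>s. lossGV A Y g (\<chi> j. \<chi> j'. if j = k \<and> j' = l then s else V$j$j')) has_field_derivative
     - 2 * (g$k)^2 * (\<Sum>m\<in>UNIV. A$m$k *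
     (Y$m$l - (\<Sum>n\<in>UNIV. A$m$n * ((g$n)^2 * V$n$l))))) (at (V$k$l))"
    unfolding lossGV_def vec_lambda_beta
    apply (rule derivative_eq_intros if_deriv refl | simp)+
    apply (simp add: if_same2 mult_ac)
    apply (simp only: ob_left ob_if ob_if2)
    apply (simp only: mult_if0 sum_delta_conj)
    apply (simp only: mult_if0 mult_if0' minus_mult_right[symmetric])
    apply (simp only: neg_if0 mult_if0 mult_if0')
    apply (simp add: sum.delta)
    apply (simp add: sum_distrib_left sum_distrib_right algebra_simps sum_subtractf sum_negf)
    done
  then show ?thesis unfolding dLdV_def by (rule DERIV_imp_deriv)
qed

lemma incr_lemma:
  fixes f f' :: "real \<Rightarrow> real"
  assumes d: "\<And>t. t \<ge> 0 \<Longrightarrow> (f has_real_derivative f' t) (at t within {0..})"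
    and nn: "\<And>t. 0 < t \<Longrightarrow> t < T \<Longrightarrow> f' t \<ge> 0" and T: "0 \<le> T"
  shows "f 0 \<le> f T"
proof (rule DERIV_nonneg_imp_increasing_open[OF T])
  fix x assume x: "0 < x" "x < T"
  have "at x within {0..} = at x"
    using x by (intro at_within_interior) auto
  with d[of x] x nn[of x] show "\<exists>y. DERIV f x :> y \<and> 0 \<le> y" by auto
next
  have "continuous_on {0..} f"
    using d by (auto simp: continuous_on_eq_continuous_within intro: DERIV_continuous)
  then show "continuous_on {0..T} f" by (rule continuous_on_subset) auto
qed

lemma const_lemma:
  fixes f :: "real \<Rightarrow> real"
  assumes d: "\<And>t. t \<ge> 0 \<Longrightarrow> (f has_real_derivative 0) (at t within {0..})"
    and T: "0 \<le> T"
  shows "f T = f 0"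
proof -
  have "f 0 \<le> f T" by (rule incr_lemma[OF d _ T]) auto
  moreover have "- f 0 \<le> - f T"
    by (rule incr_lemma[of "\<lambda>t. - f t" "\<lambda>t. 0", OF _ _ T])
      (auto intro!: derivative_eq_intros d)
  ultimately show ?thesis by simp
qed

lemma alg1: "(x::real) * y * e \<le> B * y * e \<Longrightarrow> 0 \<le> - (8 * x * y * e + y * (e * (- (8 * B))))"
  by (simp add: algebra_simps)
lemma alg2: "- (B::real) * y * e \<le> x * y * e \<Longrightarrow> 0 \<le> 8 * x * y * e + y * (e * (8 * B))"
  by (simp add: algebra_simps)

lemma cont_lemma:
  fixes h :: "real \<Rightarrow> real"
  assumes "\<And>t. t \<ge> 0 \<Longrightarrow> (h has_real_derivative D t) (at t within {0..})"
  shows "continuous_on {0..} h"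
  using assms by (auto simp: continuous_on_eq_continuous_within intro: DERIV_continuous)

theorem lemmaB6:
  fixes A :: "real^'n^'m" and Y :: "real^'l^'m"
    and g :: "real \<Rightarrow> real^'n" and V :: "real \<Rightarrow> real^'l^'n"
    and i :: 'n
  assumes flow_g: "\<And>t k. t \<ge> 0 \<Longrightarrow>
      ((\<lambda>s. g s $ k) has_real_derivative (- dLdg A Y (g t) (V t) k)) (at t within {0..})"
    and flow_V: "\<And>t k l. t \<ge> 0 \<Longrightarrow>
      ((\<lambda>s. V s $ k $ l) has_real_derivative (- dLdV A Y (g t) (V t) k l)) (at t within {0..})"
  shows "((1 / sqrt 2) * \<bar>g 0 $ i\<bar> = norm (V 0 $ i) \<and> norm (V 0 $ i) = 0 \<longrightarrow>
            (\<forall>t>0. (1 / sqrt 2) * \<bar>g t $ i\<bar> = norm (V t $ i) \<and> norm (V t $ i) = 0))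
       \<and> ((1 / sqrt 2) * \<bar>g 0 $ i\<bar> = norm (V 0 $ i) \<and> norm (V 0 $ i) > 0 \<longrightarrow>
            (\<forall>t>0. (1 / sqrt 2) * \<bar>g t $ i\<bar> = norm (V t $ i) \<and> norm (V t $ i) > 0))"
proof -
  define c where "c t l = (\<Sum>m\<in>UNIV. A$m$i *
     (Y$m$l - (\<Sum>n\<in>UNIV. A$m$n * ((g t$n)^2 * V t$n$l))))" for t l
  define s where "s t = (\<Sum>l\<in>UNIV. c t l * V t$i$l)" for t
  define u where "u t = (\<Sum>l\<in>UNIV. (V t$i$l)^2)" for t
  have dG: "((\<lambda>t. g t $ i) has_real_derivative 4 * g t $ i * s t) (at t within {0..})"
    if "t \<ge> 0" for t
    using flow_g[OF that, of i] unfolding dLdg_eq s_def c_def by simp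
  have dV: "((\<lambda>t. V t $ i $ l) has_real_derivative 2 * (g t $ i)^2 * c t l) (at t within {0..})"
    if "t \<ge> 0" for t l
    using flow_V[OF that, of i l] unfolding dLdV_eq c_def by simp
  have du: "(u has_real_derivative 4 * (g t $ i)^2 * s t) (at t within {0..})"
    if "t \<ge> 0" for t
    unfolding u_def
    apply (rule derivative_eq_intros dV[OF that] refl)+
    apply (simp add: s_def sum_distrib_left algebra_simps)
    done
  have cons: "(g t $ i)^2 / 2 - u t = (g 0 $ i)^2 / 2 - u 0" if "t \<ge> 0" for t
    by (rule const_lemma[OF _ that]) (rule derivative_eq_intros dG du refl | simp add: power2_eq_square)+
  have normV: "norm (V t $ i) = sqrt (u t)" for t
    unfolding u_def norm_vec_def L2_set_def by simp
  have u_nn: "u t \<ge> 0" for t unfolding u_def by (simp add: sum_nonneg)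
  have lhs: "(1 / sqrt 2) * \<bar>g t $ i\<bar> = sqrt ((g t $ i)^2 / 2)" for t
    by (simp add: real_sqrt_divide)
  have main: "(1 / sqrt 2) * \<bar>g t $ i\<bar> = norm (V t $ i) \<and>
      (u 0 = 0 \<longrightarrow> u t = 0) \<and> (u 0 > 0 \<longrightarrow> u t > 0)"
    if H: "(1 / sqrt 2) * \<bar>g 0 $ i\<bar> = norm (V 0 $ i)" and T: "T > 0" and tT: "t = T" for t T
  proof -
    have H0: "u 0 = (g 0 $ i)^2 / 2"
      using H unfolding lhs normV by simp
    have key: "u t = (g t $ i)^2 / 2" if "t \<ge> 0" for t
      using cons[OF that] H0 by simp
    have eq: "(1 / sqrt 2) * \<bar>g T $ i\<bar> = norm (V T $ i)"
      unfolding lhs normV using key[of T] T by simp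
    have du': "(u has_real_derivative 8 * s t * u t) (at t within {0..})" if "t \<ge> 0" for t
    proof -
      have "4 * (g t $ i)^2 * s t = 8 * s t * u t" using key[OF that] by simp
      then show ?thesis using du[OF that] by metis
    qed
    have cg: "continuous_on {0..} (\<lambda>t. g t $ n)" for n
      by (rule cont_lemma[OF flow_g])
    have cV: "continuous_on {0..} (\<lambda>t. V t $ n $ l)" for n l
      by (rule cont_lemma[OF flow_V])
    have cs: "continuous_on {0..} s"
      unfolding s_def c_def by (intro continuous_intros cg cV)
    have "compact (s ` {0..T})"
      by (rule compact_continuous_image[OF continuous_on_subset[OF cs]]) auto
    then obtain B where B: "B > 0" "\<And>x. x \<in> s ` {0..T} \<Longrightarrow> norm x \<le> B"
      using compact_imp_bounded bounded_pos by metis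
    have sB: "\<bar>s t\<bar> \<le> B" if "0 \<le> t" "t \<le> T" for t
      using B(2)[of "s t"] that by auto
    have I: "u T = 0" if "u 0 = 0"
    proof -
      have "- (u 0 * exp (- (8 * B) * 0)) \<le> - (u T * exp (- (8 * B) * T))"
      proof (rule incr_lemma[of _ "\<lambda>t. - (8 * s t * u t * exp (- (8 * B) * t) + u t * (exp (- (8 * B) * t) * (- (8 * B))))"])
        show "((\<lambda>t. - (u t * exp (- (8 * B) * t))) has_real_derivative
            - (8 * s t * u t * exp (- (8 * B) * t) + u t * (exp (- (8 * B) * t) * (- (8 * B))))) (at t within {0..})"
          if "t \<ge> 0" for t
          by (rule derivative_eq_intros du'[OF that] refl | simp)+
        fix t assume t: "0 < t" "t < T"
        have "s t * u t \<le> B * u t" using sB[of t] t u_nn[of t]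
          by (intro mult_right_mono) auto
        then have "s t * u t * exp (- (8 * B) * t) \<le> B * u t * exp (- (8 * B) * t)"
          by (rule mult_right_mono) simp
        then show "0 \<le> - (8 * s t * u t * exp (- (8 * B) * t) + u t * (exp (- (8 * B) * t) * (- (8 * B))))"
          by (rule alg1)
      qed (use T in auto)
      then have "u T * exp (- (8 * B) * T) \<le> 0" using that by simp
      then have "u T \<le> 0" by (simp add: mult_le_0_iff)
      with u_nn[of T] show ?thesis by simp
    qed
    have II: "u T > 0" if "u 0 > 0"
    proof -
      have "u 0 * exp ((8 * B) * 0) \<le> u T * exp ((8 * B) * T)"
      proof (rule incr_lemma[of _ "\<lambda>t. 8 * s t * u t * exp ((8 * B) * t) + u t * (exp ((8 * B) * t) * (8 * B))"])
        show "((\<lambda>t. u t * exp ((8 * B) * t)) has_real_derivative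
            8 * s t * u t * exp ((8 * B) * t) + u t * (exp ((8 * B) * t) * (8 * B))) (at t within {0..})"
          if "t \<ge> 0" for t
          by (rule derivative_eq_intros du'[OF that] refl | simp)+
        fix t assume t: "0 < t" "t < T"
        have "- B * u t \<le> s t * u t" using sB[of t] t u_nn[of t]
          by (intro mult_right_mono) auto
        then have "- B * u t * exp ((8 * B) * t) \<le> s t * u t * exp ((8 * B) * t)"
          by (rule mult_right_mono) simp
        then show "0 \<le> 8 * s t * u t * exp ((8 * B) * t) + u t * (exp ((8 * B) * t) * (8 * B))"
          by (rule alg2)
      qed (use T in auto)
      then have "0 < u T * exp ((8 * B) * T)" using that by simp
      then show ?thesis by (simp add: zero_less_mult_iff)
    qed
    show ?thesis using eq I II tT by auto
  qed
  have c1: "(1 / sqrt 2) * \<bar>g 0 $ i\<bar> = norm (V 0 $ i) \<and> norm (V 0 $ i) = 0 \<longrightarrow>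
            (\<forall>t>0. (1 / sqrt 2) * \<bar>g t $ i\<bar> = norm (V t $ i) \<and> norm (V t $ i) = 0)"
  proof (intro impI allI)
    fix t :: real
    assume a: "(1 / sqrt 2) * \<bar>g 0 $ i\<bar> = norm (V 0 $ i) \<and> norm (V 0 $ i) = 0" and t: "t > 0"
    then have "u 0 = 0" using u_nn[of 0] unfolding normV by simp
    with main[OF conjunct1[OF a] t refl] show "(1 / sqrt 2) * \<bar>g t $ i\<bar> = norm (V t $ i) \<and> norm (V t $ i) = 0"
      by (simp add: normV)
  qed
  have c2: "(1 / sqrt 2) * \<bar>g 0 $ i\<bar> = norm (V 0 $ i) \<and> norm (V 0 $ i) > 0 \<longrightarrow>
            (\<forall>t>0. (1 / sqrt 2) * \<bar>g t $ i\<bar> = norm (V t $ i) \<and> norm (V t $ i) > 0)"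
  proof (intro impI allI)
    fix t :: real
    assume a: "(1 / sqrt 2) * \<bar>g 0 $ i\<bar> = norm (V 0 $ i) \<and> norm (V 0 $ i) > 0" and t: "t > 0"
    then have "u 0 > 0" using u_nn[of 0] unfolding normV by simp
    with main[OF conjunct1[OF a] t refl] show "(1 / sqrt 2) * \<bar>g t $ i\<bar> = norm (V t $ i) \<and> norm (V t $ i) > 0"
      by (simp add: normV)
  qed
  show ?thesis using c1 c2 by blast
qed
end
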